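(* For any Markov policy $g:\mathcal X\to\{0,1\}$, \[\mathsf D^{(g)}=\frac{\mathsf L^{(g)}}{\mathsf M^{(g)}}\qquad\text{and}\qquad \mathsf N^{(g)}=\frac{1}{\beta\,\mathsf M^{(g)}}-\frac{1-\beta}{\beta}.\]
   Context: A restless bandit with controlled restarts has a finite or countable state space $\mathcal X$, actions $\{0,1\}$ (0 = passive, 1 = active), passive transition matrix $P$ (with entries $P_{xy}$), and active transitions that do not depend on the current state: under the active action the next state is drawn from a fixed distribution $Q=(Q_y)_{y\in\mathcal X}$. The cost function is $c:\mathcal X\times\{0,1\}\to\mathbb R$ and $\beta\in(0,1)$ is the discount factor. For a Markov policy $g$ (controlled process $X_{t+1}$ drawn from $P_{X_t\,\cdot}$ if $g(X_t)=0$ and from $Q$ if $g(X_t)=1$), $D^{(g)}(x)=(1-\beta)\mathbb E[\sum_{t\ge0}\beta^tc(X_t,g(X_t))\mid X_0=x]$ and $N^{(g)}(x)=(1-\beta)\mathbb E[\sum_{t\ge0}\beta^tg(X_t)\mid X_0=x]$; define $\mathsf D^{(g)}=\sum_xQ_xD^{(g)}(x)$ and $\mathsf N^{(g)}=\sum_xQ_xN^{(g)}(x)$. Let $\tau_g$ be the hitting time (first time $t\ge0$) of the set $\{x\in\mathcal X: g(x)=1\}$ by the process controlled by $g$, and define $\mathsf L^{(g)}=\mathbb E[\sum_{t=0}^{\tau_g}\beta^tc(X_t,g(X_t))\mid X_0\sim Q]$ and $\mathsf M^{(g)}=\mathbb E[\sum_{t=0}^{\tau_g}\beta^t\mid X_0\sim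 Q]$. *)

theory Defs
  imports "HOL-Probability.Probability"
begin

text \<open>Actions: False = passive (0), True = active (1).
  Passive transitions: row P x (a pmf); active transitions: fixed pmf Q.\<close>

definition ctrl_kernel :: "('x \<Rightarrow> 'x pmf) \<Rightarrow> 'x pmf \<Rightarrow> ('x \<Rightarrow> bool) \<Rightarrow> 'x \<Rightarrow> 'x pmf" where
  "ctrl_kernel P Q g x = (if g x then Q else P x)"

fun path_law :: "('x \<Rightarrow> 'x pmf) \<Rightarrow> 'x pmf \<Rightarrow> nat \<Rightarrow> 'x list pmf" where
  "path_law K mu 0 = map_pmf (\<lambda>x. [x]) mu"
| "path_law K mu (Suc n) =
     bind_pmf (path_law K mu n) (\<lambda>xs. map_pmf (\<lambda>y. xs @ [y]) (K (last xs)))"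

definition hit_time :: "('x \<Rightarrow> bool) \<Rightarrow> 'x list \<Rightarrow> enat" where
  "hit_time g xs = (if \<exists>t<length xs. g (xs ! t)
                    then enat (LEAST t. t < length xs \<and> g (xs ! t)) else \<infinity>)"

text \<open>Expectations of infinite sums are expressed as limits of expectations of
  partial sums over horizon T (the partial sum only depends on (X_0..X_T)).\<close>

definition D_pol :: "('x \<Rightarrow> 'x pmf) \<Rightarrow> 'x pmf \<Rightarrow> ('x \<Rightarrow> bool \<Rightarrow> real) \<Rightarrow> real
     \<Rightarrow> ('x \<Rightarrow> bool) \<Rightarrow> 'x \<Rightarrow> real" where
  "D_pol P Q c \<beta> g x = lim (\<lambda>T. measure_pmf.expectation
      (path_law (ctrl_kernel P Q g) (return_pmf x) T)
      (\<lambda>xs. (1 - \<beta>) * (\<Sum>t\<le>T. \<beta> ^ t * c (xs ! t) (g (xs ! t)))))"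

definition N_pol :: "('x \<Rightarrow> 'x pmf) \<Rightarrow> 'x pmf \<Rightarrow> real
     \<Rightarrow> ('x \<Rightarrow> bool) \<Rightarrow> 'x \<Rightarrow> real" where
  "N_pol P Q \<beta> g x = lim (\<lambda>T. measure_pmf.expectation
      (path_law (ctrl_kernel P Q g) (return_pmf x) T)
      (\<lambda>xs. (1 - \<beta>) * (\<Sum>t\<le>T. \<beta> ^ t * of_bool (g (xs ! t)))))"

definition D_sf :: "('x \<Rightarrow> 'x pmf) \<Rightarrow> 'x pmf \<Rightarrow> ('x \<Rightarrow> bool \<Rightarrow> real) \<Rightarrow> real
     \<Rightarrow> ('x \<Rightarrow> bool) \<Rightarrow> real" where
  "D_sf P Q c \<beta> g = measure_pmf.expectation Q (D_pol P Q c \<beta> g)"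

definition N_sf :: "('x \<Rightarrow> 'x pmf) \<Rightarrow> 'x pmf \<Rightarrow> real \<Rightarrow> ('x \<Rightarrow> bool) \<Rightarrow> real" where
  "N_sf P Q \<beta> g = measure_pmf.expectation Q (N_pol P Q \<beta> g)"

definition L_sf :: "('x \<Rightarrow> 'x pmf) \<Rightarrow> 'x pmf \<Rightarrow> ('x \<Rightarrow> bool \<Rightarrow> real) \<Rightarrow> real
     \<Rightarrow> ('x \<Rightarrow> bool) \<Rightarrow> real" where
  "L_sf P Q c \<beta> g = lim (\<lambda>T. measure_pmf.expectation
      (path_law (ctrl_kernel P Q g) Q T)
      (\<lambda>xs. \<Sum>t\<in>{t. t \<le> T \<and> enat t \<le> hit_time g xs}. \<beta> ^ t * c (xs ! t) (g (xs ! t))))"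

definition M_sf :: "('x \<Rightarrow> 'x pmf) \<Rightarrow> 'x pmf \<Rightarrow> real \<Rightarrow> ('x \<Rightarrow> bool) \<Rightarrow> real" where
  "M_sf P Q \<beta> g = lim (\<lambda>T. measure_pmf.expectation
      (path_law (ctrl_kernel P Q g) Q T)
      (\<lambda>xs. \<Sum>t\<in>{t. t \<le> T \<and> enat t \<le> hit_time g xs}. \<beta> ^ t))"

end

theory Submission
  imports Defs
begin

lemma int_bind_pmf:
  fixes f :: "'b \<Rightarrow> real"
  assumes "\<And>y. \<bar>f y\<bar> \<le> B"
  shows "measure_pmf.expectation (bind_pmf M N) f = measure_pmf.expectation M (\<lambda>x. measure_pmf.expectation (N x) f)"
  using measurable_measure_pmf[of N] assms
  unfolding measure_pmf_bind
  by (subst integral_bind[where K="count_space UNIV" and B=B and B'=1]) (auto intro!: measure_pmf.finite_measure)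

lemma integrable_bnd:
  fixes f :: "'b \<Rightarrow> real"
  assumes "\<And>y. \<bar>f y\<bar> \<le> B"
  shows "integrable (measure_pmf p) f"
  by (rule measure_pmf.integrable_const_bound[where B=B]) (use assms in auto)

lemma int_bnd:
  fixes f :: "'b \<Rightarrow> real"
  assumes "\<And>y. \<bar>f y\<bar> \<le> B"
  shows "\<bar>measure_pmf.expectation p f\<bar> \<le> B"
proof -
  have "\<bar>measure_pmf.expectation p f\<bar> \<le> measure_pmf.expectation p (\<lambda>y. \<bar>f y\<bar>)"
    by (rule integral_abs_bound)
  also have "\<dots> \<le> measure_pmf.expectation p (\<lambda>y. B)"
    by (rule integral_mono) (auto intro: integrable_bnd[where B=B] assms)
  finally show ?thesis by simp
qed

lemma path_law_len: "xs \<in> set_pmf (path_law K mu n) \<Longrightarrow> length xs = Suc n"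
  by (induction n arbitrary: xs) auto

lemma path_law_front:
  "path_law K (return_pmf x) (Suc n) =
     bind_pmf (K x) (\<lambda>y. map_pmf (Cons x) (path_law K (return_pmf y) n))"
proof (induction n)
  case 0
  then show ?case
    by (simp add: map_pmf_def bind_return_pmf bind_assoc_pmf)
next
  case (Suc n)
  have "path_law K (return_pmf x) (Suc (Suc n)) =
     bind_pmf (path_law K (return_pmf x) (Suc n)) (\<lambda>xs. map_pmf (\<lambda>y. xs @ [y]) (K (last xs)))"
    by simp
  also have "\<dots> = bind_pmf (K x) (\<lambda>y. bind_pmf (path_law K (return_pmf y) n)
      (\<lambda>ys. map_pmf (\<lambda>z. (x # ys) @ [z]) (K (last (x#ys)))))"
    unfolding Suc by (simp add: bind_assoc_pmf map_pmf_def bind_return_pmf)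
  also have "\<dots> = bind_pmf (K x) (\<lambda>y. bind_pmf (path_law K (return_pmf y) n)
      (\<lambda>ys. map_pmf (Cons x) (map_pmf (\<lambda>z. ys @ [z]) (K (last ys)))))"
    apply (rule bind_pmf_cong[OF refl])
    apply (rule bind_pmf_cong[OF refl])
    subgoal for y ys
      using path_law_len[of ys K "return_pmf y" n]
      by (cases ys) (auto simp: pmf.map_comp o_def)
    done
  also have "\<dots> = bind_pmf (K x) (\<lambda>y. map_pmf (Cons x) (path_law K (return_pmf y) (Suc n)))"
    by (simp add: map_bind_pmf)
  finally show ?case .
qed

lemma path_law_bind: "path_law K mu n = bind_pmf mu (\<lambda>x. path_law K (return_pmf x) n)"
proof (induction n)
  case 0
  then show ?case by (simp add: map_pmf_def bind_return_pmf)
next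
  case (Suc n)
  then show ?case by (simp add: bind_assoc_pmf bind_return_pmf)
qed

lemma stop_iff: "enat t \<le> hit_time g xs \<longleftrightarrow> (\<forall>s<t. s < length xs \<longrightarrow> \<not> g (xs ! s))"
proof (cases "\<exists>t<length xs. g (xs ! t)")
  case True
  let ?L = "LEAST t. t < length xs \<and> g (xs ! t)"
  have L: "?L < length xs \<and> g (xs ! ?L)" using True by (metis (mono_tags, lifting) LeastI_ex)
  have "enat t \<le> hit_time g xs \<longleftrightarrow> t \<le> ?L" using True by (simp add: hit_time_def)
  also have "\<dots> \<longleftrightarrow> (\<forall>s<t. s < length xs \<longrightarrow> \<not> g (xs ! s))"
    using L not_less_Least by (metis (mono_tags, lifting) leD le_less_linear order_less_le_trans)
  finally show ?thesis .
next
  case False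
  then show ?thesis by (auto simp: hit_time_def)
qed

primrec Rv :: "real \<Rightarrow> ('x \<Rightarrow> real) \<Rightarrow> ('x \<Rightarrow> real) \<Rightarrow> ('x \<Rightarrow> 'x pmf) \<Rightarrow> nat \<Rightarrow> 'x \<Rightarrow> real" where
  "Rv \<beta> h a k 0 x = h x"
| "Rv \<beta> h a k (Suc n) x = h x + \<beta> * a x * measure_pmf.expectation (k x) (Rv \<beta> h a k n)"

lemma Rv_0_fun[simp]: "Rv \<beta> h a k 0 = h"
  by auto

definition Rl :: "real \<Rightarrow> ('x \<Rightarrow> real) \<Rightarrow> ('x \<Rightarrow> real) \<Rightarrow> ('x \<Rightarrow> 'x pmf) \<Rightarrow> 'x \<Rightarrow> real" where
  "Rl \<beta> h a k x = lim (\<lambda>n. Rv \<beta> h a k n x)"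

lemma Rv_bound:
  assumes b0: "0 \<le> \<beta>" and b1: "\<beta> < 1" and hB: "\<And>x. \<bar>h x\<bar> \<le> B" and aB: "\<And>x. \<bar>a x\<bar> \<le> 1"
  shows "\<bar>Rv \<beta> h a k n x\<bar> \<le> B / (1 - \<beta>)"
proof (induction n arbitrary: x)
  case 0
  have "B \<ge> 0" using hB[of x] by simp
  then have "B \<le> B / (1 - \<beta>)" using b0 b1 by (simp add: field_simps mult_left_le)
  then show ?case using hB[of x] by simp
next
  case (Suc n)
  have E: "\<bar>measure_pmf.expectation (k x) (Rv \<beta> h a k n)\<bar> \<le> B / (1 - \<beta>)"
    by (rule int_bnd) (rule Suc.IH)
  have "\<bar>\<beta> * a x * measure_pmf.expectation (k x) (Rv \<beta> h a k n)\<bar> \<le> \<beta> * 1 * (B / (1 - \<beta>))"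
    unfolding abs_mult using b0 aB[of x] E
    by (intro mult_mono) (auto simp: abs_of_nonneg)
  moreover have "B + \<beta> * 1 * (B / (1 - \<beta>)) = B / (1 - \<beta>)" using b1 by (simp add: field_simps)
  ultimately show ?case using hB[of x] by simp
qed

lemma Rv_diff:
  assumes b0: "0 \<le> \<beta>" and b1: "\<beta> < 1" and hB: "\<And>x. \<bar>h x\<bar> \<le> B" and aB: "\<And>x. \<bar>a x\<bar> \<le> 1"
  shows "\<bar>Rv \<beta> h a k (Suc n) x - Rv \<beta> h a k n x\<bar> \<le> B * \<beta> ^ Suc n"
proof (induction n arbitrary: x)
  case 0
  have E: "\<bar>measure_pmf.expectation (k x) h\<bar> \<le> B" by (rule int_bnd) (rule hB)
  have "\<bar>\<beta> * a x * measure_pmf.expectation (k x) h\<bar> \<le> \<beta> * 1 * B"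
    unfolding abs_mult using b0 aB[of x] E
    by (intro mult_mono) (auto simp: abs_of_nonneg)
  then show ?case by (simp add: mult.commute)
next
  case (Suc n)
  have I: "\<And>m. integrable (measure_pmf (k x)) (Rv \<beta> h a k m)"
    by (rule integrable_bnd, rule Rv_bound[OF assms])
  have "Rv \<beta> h a k (Suc (Suc n)) x - Rv \<beta> h a k (Suc n) x =
     \<beta> * a x * measure_pmf.expectation (k x) (\<lambda>y. Rv \<beta> h a k (Suc n) y - Rv \<beta> h a k n y)"
  proof -
    have D: "measure_pmf.expectation (k x) (\<lambda>y. Rv \<beta> h a k (Suc n) y - Rv \<beta> h a k n y)
       = measure_pmf.expectation (k x) (Rv \<beta> h a k (Suc n)) - measure_pmf.expectation (k x) (Rv \<beta> h a k n)"
      by (rule Bochner_Integration.integral_diff[OF I I])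
    show ?thesis unfolding D by (simp only: Rv.simps(2)) (simp add: algebra_simps del: Rv.simps)
  qed
  moreover have E: "\<bar>measure_pmf.expectation (k x) (\<lambda>y. Rv \<beta> h a k (Suc n) y - Rv \<beta> h a k n y)\<bar> \<le> B * \<beta> ^ Suc n"
    by (rule int_bnd) (rule Suc.IH)
  have "\<bar>\<beta> * a x * measure_pmf.expectation (k x) (\<lambda>y. Rv \<beta> h a k (Suc n) y - Rv \<beta> h a k n y)\<bar> \<le> \<beta> * 1 * (B * \<beta> ^ Suc n)"
    unfolding abs_mult using b0 aB[of x] E
    by (intro mult_mono) (auto simp: abs_of_nonneg)
  ultimately show ?case by (simp add: algebra_simps)
qed

lemma Rv_lim:
  assumes b0: "0 \<le> \<beta>" and b1: "\<beta> < 1" and hB: "\<And>x. \<bar>h x\<bar> \<le> B" and aB: "\<And>x. \<bar>a x\<bar> \<le> 1"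
  shows "(\<lambda>n. Rv \<beta> h a k n x) \<longlonglongrightarrow> Rl \<beta> h a k x"
proof -
  define d where "d n = Rv \<beta> h a k (Suc n) x - Rv \<beta> h a k n x" for n
  have "summable (\<lambda>n. B * \<beta> ^ Suc n)"
    using b0 b1 by (intro summable_mult summable_geometric_iff[THEN iffD2] summable_mult2) auto
  moreover have "norm (d n) \<le> B * \<beta> ^ Suc n" for n
    unfolding d_def real_norm_def by (rule Rv_diff[OF assms])
  ultimately have "summable d"
    by (metis summable_comparison_test')
  then have "(\<lambda>n. \<Sum>i<n. d i) \<longlonglongrightarrow> suminf d" by (rule summable_LIMSEQ)
  then have "(\<lambda>n. Rv \<beta> h a k 0 x + (\<Sum>i<n. d i)) \<longlonglongrightarrow> Rv \<beta> h a k 0 x + suminf d"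
    by (intro tendsto_add tendsto_const)
  moreover have "Rv \<beta> h a k 0 x + (\<Sum>i<n. d i) = Rv \<beta> h a k n x" for n
    unfolding d_def by (subst sum_lessThan_telescope) simp
  ultimately have "convergent (\<lambda>n. Rv \<beta> h a k n x)" unfolding convergent_def by auto
  then show ?thesis unfolding Rl_def by (simp add: convergent_LIMSEQ_iff)
qed

lemma Rl_bound:
  assumes b0: "0 \<le> \<beta>" and b1: "\<beta> < 1" and hB: "\<And>x. \<bar>h x\<bar> \<le> B" and aB: "\<And>x. \<bar>a x\<bar> \<le> 1"
  shows "\<bar>Rl \<beta> h a k x\<bar> \<le> B / (1 - \<beta>)"
proof -
  have "(\<lambda>n. \<bar>Rv \<beta> h a k n x\<bar>) \<longlonglongrightarrow> \<bar>Rl \<beta> h a k x\<bar>"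
    by (intro tendsto_rabs Rv_lim[OF assms])
  then show ?thesis
    by (rule LIMSEQ_le_const2) (auto intro: Rv_bound[OF assms])
qed

lemma Rl_eq:
  assumes b0: "0 \<le> \<beta>" and b1: "\<beta> < 1" and hB: "\<And>x. \<bar>h x\<bar> \<le> B" and aB: "\<And>x. \<bar>a x\<bar> \<le> 1"
  shows "Rl \<beta> h a k x = h x + \<beta> * a x * measure_pmf.expectation (k x) (Rl \<beta> h a k)"
proof -
  have 1: "(\<lambda>n. Rv \<beta> h a k (Suc n) x) \<longlonglongrightarrow> Rl \<beta> h a k x"
    using Rv_lim[OF assms] by (rule LIMSEQ_Suc)
  have "(\<lambda>n. measure_pmf.expectation (k x) (Rv \<beta> h a k n)) \<longlonglongrightarrow> measure_pmf.expectation (k x) (Rl \<beta> h a k)"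
    by (rule integral_dominated_convergence[where w="\<lambda>_. B / (1 - \<beta>)"])
       (auto intro: Rv_lim[OF assms] Rv_bound[OF assms])
  then have "(\<lambda>n. Rv \<beta> h a k (Suc n) x) \<longlonglongrightarrow> h x + \<beta> * a x * measure_pmf.expectation (k x) (Rl \<beta> h a k)"
    by (simp, intro tendsto_add tendsto_mult tendsto_const)
  from LIMSEQ_unique[OF 1 this] show ?thesis .
qed

lemma uniq_zero:
  fixes f :: "'x \<Rightarrow> real"
  assumes b0: "0 \<le> \<beta>" and b1: "\<beta> < 1" and aB: "\<And>x. \<bar>a x\<bar> \<le> 1"
    and fC: "\<And>x. \<bar>f x\<bar> \<le> C"
    and eq: "\<And>x. f x = \<beta> * a x * measure_pmf.expectation (k x) f"
  shows "f x = 0"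
proof -
  have n: "\<bar>f y\<bar> \<le> \<beta> ^ n * C" for n y
  proof (induction n arbitrary: y)
    case 0 then show ?case using fC by simp
  next
    case (Suc n)
    have E: "\<bar>measure_pmf.expectation (k y) f\<bar> \<le> \<beta> ^ n * C"
      by (rule int_bnd) (rule Suc.IH)
    have "\<bar>\<beta> * a y * measure_pmf.expectation (k y) f\<bar> \<le> \<beta> * 1 * (\<beta> ^ n * C)"
      unfolding abs_mult using b0 aB[of y] E
      by (intro mult_mono) (auto simp: abs_of_nonneg)
    then show ?case using eq[of y] by simp
  qed
  have "(\<lambda>n. \<beta> ^ n * C) \<longlonglongrightarrow> 0 * C"
    using b0 b1 by (intro tendsto_mult tendsto_const LIMSEQ_power_zero) auto
  then have "\<bar>f x\<bar> \<le> 0"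
    by (intro LIMSEQ_le_const[where X="\<lambda>n. \<beta> ^ n * C"]) (auto intro: n)
  then show ?thesis by simp
qed

lemma int_affine:
  fixes f :: "'b \<Rightarrow> real"
  assumes "integrable (measure_pmf p) f"
  shows "measure_pmf.expectation p (\<lambda>y. c + d * f y) = c + d * measure_pmf.expectation p f"
  using assms by (simp add: Bochner_Integration.integral_add)

lemma sum_bnd:
  fixes f :: "nat \<Rightarrow> real"
  assumes "\<And>t. \<bar>f t\<bar> \<le> B"
  shows "\<bar>\<Sum>t\<le>n. f t\<bar> \<le> real (Suc n) * B"
proof -
  have "\<bar>\<Sum>t\<le>n. f t\<bar> \<le> (\<Sum>t\<le>n. \<bar>f t\<bar>)" by (rule sum_abs)
  also have "\<dots> \<le> (\<Sum>t\<le>n. B)" by (rule sum_mono) (rule assms)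
  finally show ?thesis by simp
qed

lemma pw_bnd:
  fixes \<beta> y B :: real
  assumes "0 \<le> \<beta>" "\<beta> \<le> 1" "\<bar>y\<bar> \<le> B"
  shows "\<bar>\<beta> ^ t * y\<bar> \<le> B"
proof -
  have "\<bar>\<beta> ^ t * y\<bar> = \<beta> ^ t * \<bar>y\<bar>" proof -
    have "\<bar>\<beta> ^ t\<bar> = \<beta> ^ t" using assms(1) by simp
    then show ?thesis by (simp add: abs_mult)
  qed
  also have "\<dots> \<le> 1 * B" using assms by (intro mult_mono) (auto simp: power_le_one)
  finally show ?thesis by simp
qed

lemma path_exp_front:
  fixes F :: "'x list \<Rightarrow> real"
  assumes "\<And>xs. \<bar>F xs\<bar> \<le> C"
  shows "measure_pmf.expectation (path_law K (return_pmf x) (Suc n)) F =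
    measure_pmf.expectation (K x) (\<lambda>y. measure_pmf.expectation (path_law K (return_pmf y) n) (\<lambda>ys. F (x # ys)))"
  unfolding path_law_front
  apply (subst int_bind_pmf[where B=C])
   apply (rule assms)
  apply simp
  done

lemma shiftV: fixes \<beta> :: real shows "(\<Sum>t\<le>Suc n. \<beta> ^ t * h ((x # ys) ! t)) = h x + \<beta> * (\<Sum>t\<le>n. \<beta> ^ t * h (ys ! t))"
  unfolding sum.atMost_Suc_shift by (simp add: sum_distrib_left mult.assoc)

lemma Vpath:
  assumes b0: "0 \<le> \<beta>" and b1: "\<beta> < 1" and hB: "\<And>x. \<bar>h x\<bar> \<le> B"
  shows "measure_pmf.expectation (path_law K (return_pmf x) n) (\<lambda>xs. \<Sum>t\<le>n. \<beta> ^ t * h (xs ! t))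
       = Rv \<beta> h (\<lambda>_. 1) K n x"
proof (induction n arbitrary: x)
  case 0
  then show ?case by simp
next
  case (Suc n)
  have bt: "\<bar>\<beta> ^ t * h y\<bar> \<le> B" for t y using b0 b1 hB by (intro pw_bnd) auto
  have "measure_pmf.expectation (path_law K (return_pmf x) (Suc n)) (\<lambda>xs. \<Sum>t\<le>Suc n. \<beta> ^ t * h (xs ! t))
    = measure_pmf.expectation (K x) (\<lambda>y. measure_pmf.expectation (path_law K (return_pmf y) n)
        (\<lambda>ys. \<Sum>t\<le>Suc n. \<beta> ^ t * h ((x # ys) ! t)))"
    by (rule path_exp_front[where C="real (Suc (Suc n)) * B"]) (rule sum_bnd, rule bt)
  also have "\<dots> = measure_pmf.expectation (K x) (\<lambda>y. measure_pmf.expectation (path_law K (return_pmf y) n)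
        (\<lambda>ys. h x + \<beta> * (\<Sum>t\<le>n. \<beta> ^ t * h (ys ! t))))"
    by (simp only: shiftV)
  also have "\<dots> = measure_pmf.expectation (K x) (\<lambda>y. h x + \<beta> * Rv \<beta> h (\<lambda>_. 1) K n y)"
  proof -
    have "measure_pmf.expectation (path_law K (return_pmf y) n)
        (\<lambda>ys. h x + \<beta> * (\<Sum>t\<le>n. \<beta> ^ t * h (ys ! t))) = h x + \<beta> * Rv \<beta> h (\<lambda>_. 1) K n y" for y
    proof -
      have "integrable (measure_pmf (path_law K (return_pmf y) n)) (\<lambda>ys. \<Sum>t\<le>n. \<beta> ^ t * h (ys ! t))"
        by (rule integrable_bnd[where B="real (Suc n) * B"]) (rule sum_bnd, rule bt)
      from int_affine[OF this] show ?thesis by (simp only: Suc.IH)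
    qed
    then show ?thesis by (simp only:)
  qed
  also have "\<dots> = h x + \<beta> * measure_pmf.expectation (K x) (Rv \<beta> h (\<lambda>_. 1) K n)"
    by (rule int_affine, rule integrable_bnd, rule Rv_bound[OF b0 b1 hB]) simp
  also have "\<dots> = Rv \<beta> h (\<lambda>_. 1) K (Suc n) x"
    by simp
  finally show ?case .
qed

lemma sum_filter_if: fixes n :: nat shows
  "(\<Sum>t\<in>{t. t \<le> n \<and> P t}. f t) = (\<Sum>t\<le>n. if P t then f t else 0)"
proof -
  have "{t. t \<le> n \<and> P t} = {..n} \<inter> {t. P t}" by auto
  then show ?thesis using sum.inter_restrict[OF finite_atMost, of f n "{t. P t}"] by simp
qed

definition stp :: "('x \<Rightarrow> bool) \<Rightarrow> nat \<Rightarrow> 'x list \<Rightarrow> bool" where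
  "stp g t xs = (\<forall>s<t. s < length xs \<longrightarrow> \<not> g (xs ! s))"

lemma stp_0[simp]: "stp g 0 xs" by (simp add: stp_def)
lemma stp_Suc[simp]: "stp g (Suc t) (x # ys) = (\<not> g x \<and> stp g t ys)"
  unfolding stp_def by (auto simp: All_less_Suc2)

lemma stopped_sum:
  "(\<Sum>t\<in>{t. t \<le> n \<and> enat t \<le> hit_time g xs}. f t xs) = (\<Sum>t\<le>n. if stp g t xs then f t xs else 0)"
  unfolding stop_iff stp_def[symmetric] by (rule sum_filter_if)

lemma shiftW: fixes \<beta> :: real shows
  "(\<Sum>t\<le>Suc n. if stp g t (x # ys) then \<beta> ^ t * h ((x # ys) ! t) else 0)
   = h x + \<beta> * of_bool (\<not> g x) * (\<Sum>t\<le>n. if stp g t ys then \<beta> ^ t * h (ys ! t) else 0)"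
  unfolding sum.atMost_Suc_shift by (cases "g x") (simp_all add: sum_distrib_left mult.assoc if_distrib power_Suc cong: if_cong)

lemma Wpath:
  fixes \<beta> :: real
  assumes b0: "0 \<le> \<beta>" and b1: "\<beta> < 1" and hB: "\<And>x. \<bar>h x\<bar> \<le> B"
  shows "measure_pmf.expectation (path_law (ctrl_kernel P Q g) (return_pmf x) n)
          (\<lambda>xs. \<Sum>t\<le>n. if stp g t xs then \<beta> ^ t * h (xs ! t) else 0)
       = Rv \<beta> h (\<lambda>x. of_bool (\<not> g x)) P n x"
proof (induction n arbitrary: x)
  case 0
  then show ?case by simp
next
  case (Suc n)
  let ?K = "ctrl_kernel P Q g"
  let ?a = "\<lambda>x. of_bool (\<not> g x) :: real"
  have bt: "\<bar>if b then \<beta> ^ t * h y else 0\<bar> \<le> B" for b t y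
    using b0 b1 hB[of y] pw_bnd[of \<beta> "h y" B t] by auto
  have aB: "\<bar>?a y\<bar> \<le> 1" for y by simp
  have "measure_pmf.expectation (path_law ?K (return_pmf x) (Suc n))
          (\<lambda>xs. \<Sum>t\<le>Suc n. if stp g t xs then \<beta> ^ t * h (xs ! t) else 0)
    = measure_pmf.expectation (?K x) (\<lambda>y. measure_pmf.expectation (path_law ?K (return_pmf y) n)
        (\<lambda>ys. \<Sum>t\<le>Suc n. if stp g t (x # ys) then \<beta> ^ t * h ((x # ys) ! t) else 0))"
    by (rule path_exp_front[where C="real (Suc (Suc n)) * B"]) (rule sum_bnd, rule bt)
  also have "\<dots> = measure_pmf.expectation (?K x) (\<lambda>y. measure_pmf.expectation (path_law ?K (return_pmf y) n)
        (\<lambda>ys. h x + \<beta> * ?a x * (\<Sum>t\<le>n. if stp g t ys then \<beta> ^ t * h (ys ! t) else 0)))"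
    by (simp only: shiftW)
  also have "\<dots> = measure_pmf.expectation (?K x) (\<lambda>y. h x + \<beta> * ?a x * Rv \<beta> h ?a P n y)"
  proof -
    have "measure_pmf.expectation (path_law ?K (return_pmf y) n)
        (\<lambda>ys. h x + \<beta> * ?a x * (\<Sum>t\<le>n. if stp g t ys then \<beta> ^ t * h (ys ! t) else 0))
       = h x + \<beta> * ?a x * Rv \<beta> h ?a P n y" for y
    proof -
      have "integrable (measure_pmf (path_law ?K (return_pmf y) n)) (\<lambda>ys. \<Sum>t\<le>n. if stp g t ys then \<beta> ^ t * h (ys ! t) else 0)"
        by (rule integrable_bnd[where B="real (Suc n) * B"]) (rule sum_bnd, rule bt)
      from int_affine[OF this] show ?thesis by (simp only: Suc.IH)
    qed
    then show ?thesis by (simp only:)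
  qed
  also have "\<dots> = h x + \<beta> * ?a x * measure_pmf.expectation (?K x) (Rv \<beta> h ?a P n)"
    by (rule int_affine, rule integrable_bnd, rule Rv_bound[OF b0 b1 hB aB])
  also have "\<dots> = Rv \<beta> h ?a P (Suc n) x"
    by (cases "g x") (simp_all add: ctrl_kernel_def)
  finally show ?case .
qed

lemma Dlem:
  fixes \<beta> :: real
  assumes b0: "0 \<le> \<beta>" and b1: "\<beta> < 1" and hB: "\<And>x. \<bar>h x\<bar> \<le> B"
  shows "lim (\<lambda>T. measure_pmf.expectation (path_law K (return_pmf x) T)
      (\<lambda>xs. (1 - \<beta>) * (\<Sum>t\<le>T. \<beta> ^ t * h (xs ! t)))) = (1 - \<beta>) * Rl \<beta> h (\<lambda>_. 1) K x"
proof -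
  have aB: "\<bar>(\<lambda>_. 1::real) y\<bar> \<le> 1" for y :: 'a by simp
  have "(\<lambda>T. (1 - \<beta>) * Rv \<beta> h (\<lambda>_. 1) K T x) \<longlonglongrightarrow> (1 - \<beta>) * Rl \<beta> h (\<lambda>_. 1) K x"
    by (intro tendsto_mult tendsto_const Rv_lim[OF b0 b1 hB aB])
  moreover have "measure_pmf.expectation (path_law K (return_pmf x) T)
      (\<lambda>xs. (1 - \<beta>) * (\<Sum>t\<le>T. \<beta> ^ t * h (xs ! t))) = (1 - \<beta>) * Rv \<beta> h (\<lambda>_. 1) K T x" for T
    by (subst integral_mult_right_zero, subst Vpath[OF b0 b1 hB]) (rule refl)
  ultimately show ?thesis
    by (simp only: limI)
qed

lemma Llem:
  fixes \<beta> :: real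
  assumes b0: "0 \<le> \<beta>" and b1: "\<beta> < 1" and hB: "\<And>x. \<bar>h x\<bar> \<le> B"
  shows "lim (\<lambda>T. measure_pmf.expectation (path_law (ctrl_kernel P Q g) Q T)
      (\<lambda>xs. \<Sum>t\<in>{t. t \<le> T \<and> enat t \<le> hit_time g xs}. \<beta> ^ t * h (xs ! t)))
    = measure_pmf.expectation Q (Rl \<beta> h (\<lambda>x. of_bool (\<not> g x)) P)"
proof -
  let ?a = "\<lambda>x. of_bool (\<not> g x) :: real"
  have aB: "\<bar>?a y\<bar> \<le> 1" for y by simp
  have bt: "\<bar>if b then \<beta> ^ t * h y else 0\<bar> \<le> B" for b t y
    using b0 b1 hB[of y] pw_bnd[of \<beta> "h y" B t] by auto
  have eq: "measure_pmf.expectation (path_law (ctrl_kernel P Q g) Q T)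
      (\<lambda>xs. \<Sum>t\<in>{t. t \<le> T \<and> enat t \<le> hit_time g xs}. \<beta> ^ t * h (xs ! t))
    = measure_pmf.expectation Q (Rv \<beta> h ?a P T)" for T
  proof -
    have "measure_pmf.expectation (path_law (ctrl_kernel P Q g) Q T)
      (\<lambda>xs. \<Sum>t\<in>{t. t \<le> T \<and> enat t \<le> hit_time g xs}. \<beta> ^ t * h (xs ! t))
      = measure_pmf.expectation (path_law (ctrl_kernel P Q g) Q T)
      (\<lambda>xs. \<Sum>t\<le>T. if stp g t xs then \<beta> ^ t * h (xs ! t) else 0)"
      by (simp only: stopped_sum[where f="\<lambda>t xs. \<beta> ^ t * h (xs ! t)"])
    also have "\<dots> = measure_pmf.expectation Q (\<lambda>x. measure_pmf.expectation (path_law (ctrl_kernel P Q g) (return_pmf x) T)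
      (\<lambda>xs. \<Sum>t\<le>T. if stp g t xs then \<beta> ^ t * h (xs ! t) else 0))"
      by (subst path_law_bind, rule int_bind_pmf[where B="real (Suc T) * B"]) (rule sum_bnd, rule bt)
    also have "\<dots> = measure_pmf.expectation Q (Rv \<beta> h ?a P T)"
      by (subst Wpath[OF b0 b1 hB]) (rule refl)
    finally show ?thesis .
  qed
  have "(\<lambda>T. measure_pmf.expectation Q (Rv \<beta> h ?a P T)) \<longlonglongrightarrow> measure_pmf.expectation Q (Rl \<beta> h ?a P)"
    by (rule integral_dominated_convergence[where w="\<lambda>_. B / (1 - \<beta>)"])
       (auto intro: Rv_lim[OF b0 b1 hB aB] Rv_bound[OF b0 b1 hB aB])
  then show ?thesis unfolding eq by (rule limI)
qed

lemma W1_ge: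
  fixes \<beta> :: real
  assumes b0: "0 \<le> \<beta>" and b1: "\<beta> < 1" and a0: "\<And>x. 0 \<le> a x" and a1: "\<And>x. \<bar>a x\<bar> \<le> 1"
  shows "1 \<le> Rl \<beta> (\<lambda>_. 1) a k x"
proof -
  have hB: "\<bar>(\<lambda>_. 1::real) y\<bar> \<le> 1" for y :: 'a by simp
  have "1 \<le> Rv \<beta> (\<lambda>_. 1) a k n y" for n y
  proof (induction n arbitrary: y)
    case 0 then show ?case by simp
  next
    case (Suc n)
    have "1 \<le> measure_pmf.expectation (k y) (Rv \<beta> (\<lambda>_. 1) a k n)"
      by (rule measure_pmf.integral_ge_const)
         (auto intro: integrable_bnd Rv_bound[OF b0 b1 hB a1] Suc.IH)
    then have "0 \<le> \<beta> * a y * measure_pmf.expectation (k y) (Rv \<beta> (\<lambda>_. 1) a k n)"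
      using b0 a0[of y] by simp
    then show ?case by simp
  qed
  then show ?thesis
    by (intro LIMSEQ_le_const[OF Rv_lim[OF b0 b1 hB a1]]) auto
qed

lemma renewal:
  fixes \<beta> :: real
  assumes b0: "0 < \<beta>" and b1: "\<beta> < 1" and hB: "\<And>x. \<bar>h x\<bar> \<le> B"
  shows "measure_pmf.expectation Q (Rl \<beta> h (\<lambda>_. 1) (ctrl_kernel P Q g)) *
           ((1 - \<beta>) * measure_pmf.expectation Q (Rl \<beta> (\<lambda>_. 1) (\<lambda>x. of_bool (\<not> g x)) P))
         = measure_pmf.expectation Q (Rl \<beta> h (\<lambda>x. of_bool (\<not> g x)) P)"
proof -
  have b0': "0 \<le> \<beta>" using b0 by simp
  define a where "a = (\<lambda>x. of_bool (\<not> g x) :: real)"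
  define K where "K = ctrl_kernel P Q g"
  define V where "V = Rl \<beta> h (\<lambda>_. 1) K"
  define W where "W = Rl \<beta> h a P"
  define W1 where "W1 = Rl \<beta> (\<lambda>_. 1) a P"
  define EV where "EV = measure_pmf.expectation Q V"
  define Bv where "Bv = B / (1 - \<beta>)"
  have aB: "\<bar>a y\<bar> \<le> 1" for y by (simp add: a_def)
  have oB: "\<bar>(\<lambda>_. 1::real) y\<bar> \<le> 1" for y :: 'a by simp
  have h1: "\<bar>(\<lambda>_. 1::real) y\<bar> \<le> 1" for y :: 'a by simp
  have Vb: "\<bar>V y\<bar> \<le> Bv" for y unfolding V_def Bv_def by (rule Rl_bound[OF b0' b1 hB oB])
  have Wb: "\<bar>W y\<bar> \<le> Bv" for y unfolding W_def Bv_def by (rule Rl_bound[OF b0' b1 hB aB])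
  have W1b: "\<bar>W1 y\<bar> \<le> 1 / (1 - \<beta>)" for y unfolding W1_def by (rule Rl_bound[OF b0' b1 h1 aB])
  have EVb: "\<bar>EV\<bar> \<le> Bv" unfolding EV_def by (rule int_bnd) (rule Vb)
  have Bv0: "0 \<le> Bv" using Vb[of undefined] by simp
  define U where "U y = W y + (1 + (\<beta> - 1) * W1 y) * EV" for y
  have cb: "\<bar>1 + (\<beta> - 1) * W1 y\<bar> \<le> 2" for y
  proof -
    have "\<bar>(\<beta> - 1) * W1 y\<bar> = (1 - \<beta>) * \<bar>W1 y\<bar>" using b1 by (simp add: abs_mult)
    also have "\<dots> \<le> (1 - \<beta>) * (1 / (1 - \<beta>))" using b1 W1b[of y] by (intro mult_left_mono) auto
    also have "\<dots> = 1" using b1 by simp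
    finally show ?thesis by linarith
  qed
  have Ub: "\<bar>U y\<bar> \<le> 3 * Bv" for y
  proof -
    have "\<bar>(1 + (\<beta> - 1) * W1 y) * EV\<bar> \<le> 2 * Bv"
      unfolding abs_mult by (intro mult_mono cb EVb) auto
    then show ?thesis using Wb[of y] unfolding U_def by linarith
  qed
  have iV: "integrable (measure_pmf p) V" for p by (rule integrable_bnd) (rule Vb)
  have iW: "integrable (measure_pmf p) W" for p by (rule integrable_bnd) (rule Wb)
  have iW1: "integrable (measure_pmf p) W1" for p by (rule integrable_bnd) (rule W1b)
  have iU: "integrable (measure_pmf p) U" for p by (rule integrable_bnd) (rule Ub)
  have EU: "measure_pmf.expectation p U = measure_pmf.expectation p W +
       (1 + (\<beta> - 1) * measure_pmf.expectation p W1) * EV" for p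
  proof -
    have i2: "integrable (measure_pmf p) (\<lambda>y. (1 + (\<beta> - 1) * W1 y) * EV)"
      by (rule integrable_bnd[where B="2 * Bv"]) (unfold abs_mult, intro mult_mono cb EVb, auto)
    have "measure_pmf.expectation p U = measure_pmf.expectation p W +
       measure_pmf.expectation p (\<lambda>y. (1 + (\<beta> - 1) * W1 y) * EV)"
      unfolding U_def by (rule Bochner_Integration.integral_add[OF iW i2])
    also have "measure_pmf.expectation p (\<lambda>y. (1 + (\<beta> - 1) * W1 y) * EV) =
        measure_pmf.expectation p (\<lambda>y. 1 + (\<beta> - 1) * W1 y) * EV"
      by (rule integral_mult_left_zero)
    also have "measure_pmf.expectation p (\<lambda>y. 1 + (\<beta> - 1) * W1 y) = 1 + (\<beta> - 1) * measure_pmf.expectation p W1"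
      by (rule int_affine[OF iW1])
    finally show ?thesis .
  qed
  have Veq: "V x = h x + \<beta> * 1 * measure_pmf.expectation (K x) V" for x
    unfolding V_def by (rule Rl_eq[OF b0' b1 hB oB])
  have Weq: "W x = h x + \<beta> * a x * measure_pmf.expectation (P x) W" for x
    unfolding W_def by (rule Rl_eq[OF b0' b1 hB aB])
  have W1eq: "W1 x = 1 + \<beta> * a x * measure_pmf.expectation (P x) W1" for x
    unfolding W1_def using Rl_eq[where h="\<lambda>_. 1" and B=1, OF b0' b1 _ aB] by simp
  have Deq: "V x - U x = \<beta> * a x * measure_pmf.expectation (P x) (\<lambda>y. V y - U y)" for x
  proof (cases "g x")
    case True
    then have "K x = Q" "a x = 0" by (simp_all add: K_def ctrl_kernel_def a_def)
    then show ?thesis using Veq[of x] Weq[of x] W1eq[of x] unfolding U_def EV_def by simp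
  next
    case False
    then have KP: "K x = P x" and a1: "a x = 1" by (simp_all add: K_def ctrl_kernel_def a_def)
    have D: "measure_pmf.expectation (P x) (\<lambda>y. V y - U y) = measure_pmf.expectation (P x) V -
       (measure_pmf.expectation (P x) W + (1 + (\<beta> - 1) * measure_pmf.expectation (P x) W1) * EV)"
      using Bochner_Integration.integral_diff[OF iV iU, of "P x"] EU[of "P x"] by simp
    have "V x - U x = (h x + \<beta> * measure_pmf.expectation (P x) V) -
       (h x + \<beta> * measure_pmf.expectation (P x) W + (1 + (\<beta> - 1) * (1 + \<beta> * measure_pmf.expectation (P x) W1)) * EV)"
      using Veq[of x] Weq[of x] W1eq[of x] unfolding KP a1 U_def by simp
    then show ?thesis unfolding D a1 by (simp add: algebra_simps)
  qed
  have DB: "\<bar>V y - U y\<bar> \<le> 4 * Bv" for y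
    using Vb[of y] Ub[of y] abs_triangle_ineq4[of "V y" "U y"] by linarith
  have VU: "V y - U y = 0" for y
    by (rule uniq_zero[where C="4 * Bv", OF b0' b1 aB DB Deq])
  have "EV = measure_pmf.expectation Q U"
    unfolding EV_def using VU by (metis eq_iff_diff_eq_0)
  also have "\<dots> = measure_pmf.expectation Q W + (1 + (\<beta> - 1) * measure_pmf.expectation Q W1) * EV"
    by (rule EU)
  finally have "EV * ((1 - \<beta>) * measure_pmf.expectation Q W1) = measure_pmf.expectation Q W"
    by (simp add: algebra_simps)
  then show ?thesis unfolding EV_def V_def W_def W1_def K_def a_def .
qed

theorem theorem4:
  fixes P :: "'x::countable \<Rightarrow> 'x pmf" and Q :: "'x pmf"
    and c :: "'x \<Rightarrow> bool \<Rightarrow> real" and \<beta> :: real and g :: "'x \<Rightarrow> bool"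
  assumes "0 < \<beta>" and "\<beta> < 1"
    and "\<exists>B. \<forall>x a. \<bar>c x a\<bar> \<le> B"
  shows "D_sf P Q c \<beta> g = L_sf P Q c \<beta> g / M_sf P Q \<beta> g
       \<and> N_sf P Q \<beta> g = 1 / (\<beta> * M_sf P Q \<beta> g) - (1 - \<beta>) / \<beta>"
proof -
  note b0 = assms(1) and b1 = assms(2)
  have b0': "0 \<le> \<beta>" using b0 by simp
  obtain B where cB: "\<And>x a. \<bar>c x a\<bar> \<le> B" using assms(3) by blast
  define h where "h x = c x (g x)" for x
  define hN where "hN x = (of_bool (g x) :: real)" for x
  define a where "a = (\<lambda>x. of_bool (\<not> g x) :: real)"
  define K where "K = ctrl_kernel P Q g"
  have hB: "\<bar>h x\<bar> \<le> B" for x unfolding h_def by (rule cB)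
  have hNB: "\<bar>hN x\<bar> \<le> 1" for x unfolding hN_def by simp
  have h1: "\<bar>(\<lambda>_. 1::real) x\<bar> \<le> 1" for x :: 'x by simp
  have aB: "\<bar>a y\<bar> \<le> 1" for y by (simp add: a_def)
  define M where "M = measure_pmf.expectation Q (Rl \<beta> (\<lambda>_. 1) a P)"
  have Mdef: "M_sf P Q \<beta> g = M"
  proof -
    have "M_sf P Q \<beta> g = lim (\<lambda>T. measure_pmf.expectation (path_law (ctrl_kernel P Q g) Q T)
      (\<lambda>xs. \<Sum>t\<in>{t. t \<le> T \<and> enat t \<le> hit_time g xs}. \<beta> ^ t * (\<lambda>_. 1) (xs ! t)))"
      by (simp add: M_sf_def)
    also have "\<dots> = M" unfolding M_def a_def by (rule Llem[where B=1, OF b0' b1]) simp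
    finally show ?thesis .
  qed
  have M1: "1 \<le> M" unfolding M_def
  proof (rule measure_pmf.integral_ge_const)
    show "integrable (measure_pmf Q) (Rl \<beta> (\<lambda>_. 1) a P)"
      by (rule integrable_bnd, rule Rl_bound[where B=1, OF b0' b1 _ aB]) simp
    show "AE x in measure_pmf Q. 1 \<le> Rl \<beta> (\<lambda>_. 1) a P x"
      by (intro AE_I2 W1_ge[OF b0' b1 _ aB]) (simp add: a_def)
  qed
  have Dx: "D_pol P Q c \<beta> g x = (1 - \<beta>) * Rl \<beta> h (\<lambda>_. 1) K x" for x
    unfolding D_pol_def K_def using Dlem[where h=h, OF b0' b1 hB] by (simp add: h_def)
  have Ldef: "L_sf P Q c \<beta> g = measure_pmf.expectation Q (Rl \<beta> h a P)"
    unfolding L_sf_def a_def using Llem[where h=h, OF b0' b1 hB] by (simp add: h_def)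
  have R1: "measure_pmf.expectation Q (Rl \<beta> h (\<lambda>_. 1) K) * ((1 - \<beta>) * M) = measure_pmf.expectation Q (Rl \<beta> h a P)"
    unfolding M_def K_def a_def by (rule renewal[OF b0 b1 hB])
  have D1: "D_sf P Q c \<beta> g = (1 - \<beta>) * measure_pmf.expectation Q (Rl \<beta> h (\<lambda>_. 1) K)"
    unfolding D_sf_def Dx by simp
  have part1: "D_sf P Q c \<beta> g = L_sf P Q c \<beta> g / M_sf P Q \<beta> g"
    unfolding D1 Ldef Mdef R1[symmetric] using M1 by (simp add: field_simps)
  have Nx: "N_pol P Q \<beta> g x = (1 - \<beta>) * Rl \<beta> hN (\<lambda>_. 1) K x" for x
    unfolding N_pol_def K_def using Dlem[where h=hN, OF b0' b1 hNB] by (simp add: hN_def)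
  have R2: "measure_pmf.expectation Q (Rl \<beta> hN (\<lambda>_. 1) K) * ((1 - \<beta>) * M) = measure_pmf.expectation Q (Rl \<beta> hN a P)"
    unfolding M_def K_def a_def by (rule renewal[OF b0 b1 hNB])
  define W1 where "W1 = Rl \<beta> (\<lambda>_. 1) a P"
  define WN where "WN = Rl \<beta> hN a P"
  have W1b: "\<bar>W1 y\<bar> \<le> 1 / (1 - \<beta>)" for y unfolding W1_def by (rule Rl_bound[where B=1, OF b0' b1 _ aB]) simp
  have WNb: "\<bar>WN y\<bar> \<le> 1 / (1 - \<beta>)" for y unfolding WN_def by (rule Rl_bound[OF b0' b1 hNB aB])
  have iW1: "integrable (measure_pmf p) W1" for p by (rule integrable_bnd) (rule W1b)
  have iWN: "integrable (measure_pmf p) WN" for p by (rule integrable_bnd) (rule WNb)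
  define A where "A y = 1 / \<beta> + ((\<beta> - 1) / \<beta>) * W1 y" for y
  have iA: "integrable (measure_pmf p) A" for p
    unfolding A_def by (intro Bochner_Integration.integrable_add integrable_mult_right iW1 measure_pmf.integrable_const)
  have EA: "measure_pmf.expectation p A = 1 / \<beta> + ((\<beta> - 1) / \<beta>) * measure_pmf.expectation p W1" for p
    unfolding A_def by (rule int_affine[OF iW1])
  have W1eq: "W1 x = 1 + \<beta> * a x * measure_pmf.expectation (P x) W1" for x
    unfolding W1_def using Rl_eq[where h="\<lambda>_. 1" and B=1, OF b0' b1 _ aB] by simp
  have WNeq: "WN x = hN x + \<beta> * a x * measure_pmf.expectation (P x) WN" for x
    unfolding WN_def by (rule Rl_eq[OF b0' b1 hNB aB])
  have Deq: "WN x - A x = \<beta> * a x * measure_pmf.expectation (P x) (\<lambda>y. WN y - A y)" for x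
  proof (cases "g x")
    case True
    then have "a x = 0" "hN x = 1" by (simp_all add: a_def hN_def)
    then show ?thesis using WNeq[of x] W1eq[of x] b0 unfolding A_def by (simp add: field_simps)
  next
    case False
    then have a1: "a x = 1" and h0: "hN x = 0" by (simp_all add: a_def hN_def)
    have D: "measure_pmf.expectation (P x) (\<lambda>y. WN y - A y) = measure_pmf.expectation (P x) WN -
         (1 / \<beta> + ((\<beta> - 1) / \<beta>) * measure_pmf.expectation (P x) W1)"
      using Bochner_Integration.integral_diff[OF iWN iA, of "P x"] EA[of "P x"] by simp
    have "WN x - A x = \<beta> * measure_pmf.expectation (P x) WN -
       (1 / \<beta> + ((\<beta> - 1) / \<beta>) * (1 + \<beta> * measure_pmf.expectation (P x) W1))"
      using WNeq[of x] W1eq[of x] unfolding a1 h0 A_def by simp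
    then show ?thesis unfolding D a1 using b0 by (simp add: field_simps)
  qed
  have Ab: "\<bar>A y\<bar> \<le> 1 / \<beta> + \<bar>(\<beta> - 1) / \<beta>\<bar> * (1 / (1 - \<beta>))" for y
  proof -
    have "\<bar>((\<beta> - 1) / \<beta>) * W1 y\<bar> \<le> \<bar>(\<beta> - 1) / \<beta>\<bar> * (1 / (1 - \<beta>))"
      unfolding abs_mult by (intro mult_left_mono W1b) auto
    moreover have "\<bar>A y\<bar> \<le> \<bar>1 / \<beta>\<bar> + \<bar>((\<beta> - 1) / \<beta>) * W1 y\<bar>"
      unfolding A_def by (rule abs_triangle_ineq)
    moreover have "\<bar>1 / \<beta>\<bar> = 1 / \<beta>" using b0 by simp
    ultimately show ?thesis by linarith
  qed
  have DB: "\<bar>WN y - A y\<bar> \<le> 1 / (1 - \<beta>) + (1 / \<beta> + \<bar>(\<beta> - 1) / \<beta>\<bar> * (1 / (1 - \<beta>)))" for y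
    using WNb[of y] Ab[of y] abs_triangle_ineq4[of "WN y" "A y"] by linarith
  have WA: "WN y - A y = 0" for y
    by (rule uniq_zero[OF b0' b1 aB DB Deq])
  have EWN: "measure_pmf.expectation Q WN = 1 / \<beta> + ((\<beta> - 1) / \<beta>) * M"
  proof -
    have "WN = A" using WA by (auto simp: fun_eq_iff)
    then show ?thesis using EA[of Q] unfolding M_def W1_def by simp
  qed
  have N1: "N_sf P Q \<beta> g = (1 - \<beta>) * measure_pmf.expectation Q (Rl \<beta> hN (\<lambda>_. 1) K)"
    unfolding N_sf_def Nx by simp
  have part2: "N_sf P Q \<beta> g = 1 / (\<beta> * M_sf P Q \<beta> g) - (1 - \<beta>) / \<beta>"
  proof -
    have "N_sf P Q \<beta> g * M = 1 / \<beta> + ((\<beta> - 1) / \<beta>) * M"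
      unfolding N1 using R2 EWN unfolding WN_def by (simp add: algebra_simps)
    then show ?thesis unfolding Mdef using M1 b0 by (simp add: field_simps)
  qed
  show ?thesis using part1 part2 by blast
qed

end
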